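(* Let $C_0>0$, $C_1\ge0$, $p>1$, $q>1$ and $t_0\ge2$, and let $\Phi$ be a real-valued differentiable function on $[t_0,\infty)$ satisfying $$\frac{d\Phi}{dt}(t)\le-\frac{C_0}{t}|\Phi(t)|^p+\frac{C_1}{t^q},\qquad t\ge t_0.$$ Then $$\Phi(t)\le\frac{C_2}{(\log t)^{p^*-1}},\qquad t\ge t_0,$$ where $p^*$ is the H\"older conjugate of $p$ (i.e. $1/p+1/p^*=1$) and $$C_2=\frac1{\log2}\Bigl((\log t_0)^{p^*}\Phi(t_0)+C_1\int_2^\infty\frac{(\log\tau)^{p^*}}{\tau^q}d\tau\Bigr)+\Bigl(\frac{p^*}{C_0p}\Bigr)^{p^*-1}.$$ *)

theory Defs
  imports "HOL-Analysis.Analysis"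
begin

definition holder_conj :: "real \<Rightarrow> real" where
  "holder_conj p = p / (p - 1)"

end

theory Submission
  imports Defs
begin


lemma dec_helper:
  fixes f f' :: "real \<Rightarrow> real"
  assumes "a \<le> b"
    and d: "\<And>x. x \<in> {a..b} \<Longrightarrow> (f has_real_derivative f' x) (at x within {a..b})"
    and n: "\<And>x. a < x \<Longrightarrow> x < b \<Longrightarrow> f' x \<le> 0"
  shows "f b \<le> f a"
proof (rule DERIV_nonpos_imp_decreasing_open[OF assms(1)])
  fix x assume x: "a < x" "x < b"
  have "(f has_real_derivative f' x) (at x within {a<..<b})"
    using d[of x] x by (auto intro: has_field_derivative_subset)
  hence "(f has_real_derivative f' x) (at x)"
    using x at_within_open[of x "{a<..<b}"] by simp
  thus "\<exists>y. (f has_real_derivative y) (at x) \<and> y \<le> 0" using n x by blast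
next
  show "continuous_on {a..b} f"
    unfolding continuous_on_eq_continuous_within using d DERIV_continuous by blast
qed

lemma young_helper:
  fixes p C0 L x :: real
  assumes p: "p > 1" and C0: "C0 > 0" and L: "L > 0" and x: "x \<ge> 0"
  shows "holder_conj p * L powr (holder_conj p - 1) * x
     \<le> C0 * L powr (holder_conj p) * x powr p
       + (holder_conj p / (C0 * p)) powr (holder_conj p - 1)"
proof -
  define s where "s = holder_conj p"
  have s: "s = p / (p - 1)" by (simp add: s_def holder_conj_def)
  have s1: "s > 1" using p by (simp add: s field_simps)
  have conj: "1/p + 1/s = 1" using p by (simp add: s field_simps)
  have sp: "s / p = s - 1" using p by (simp add: s field_simps)
  define M where "M = C0 * p * L powr s"
  have M: "M > 0" using p C0 L by (simp add: M_def)
  define a where "a = x * M powr (1/p)"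
  define b where "b = s * L powr (s-1) * M powr (-1/p)"
  have a0: "a \<ge> 0" using x by (simp add: a_def)
  have b0: "b \<ge> 0" using s1 by (simp add: b_def)
  have ab: "a * b = s * L powr (s-1) * x"
    using M by (simp add: a_def b_def powr_minus powr_divide field_simps)
  have ap: "a powr p / p = C0 * L powr s * x powr p"
    using M x p C0 by (simp add: a_def powr_mult powr_powr M_def)
  have "b powr s = s powr s * L powr (s * (s - 1)) * M powr (-(s/p))"
    using M s1 L by (simp add: b_def powr_mult powr_powr mult.commute)
  also have "M powr (-(s/p)) = (C0*p) powr (-(s/p)) * L powr (s * (-(s/p)))"
    using C0 p L by (simp add: M_def powr_mult powr_powr)
  also have "\<dots> = (C0*p) powr (-(s-1)) * L powr (-(s*(s-1)))"
    using sp by (metis minus_mult_right)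
  finally have "b powr s = s powr s * (C0*p) powr (-(s-1))"
    using L by (simp add: algebra_simps powr_add[symmetric])
  hence bs: "b powr s / s = (s / (C0*p)) powr (s-1)"
    using s1 C0 p by (simp add: powr_divide powr_minus powr_diff field_simps)
  have "a * b \<le> a powr p / p + b powr s / s"
    by (rule Youngs_inequality[OF p s1 conj a0 b0])
  thus ?thesis using ab ap bs by (simp add: s_def)
qed

lemma g_cont:
  fixes s q a b :: real
  assumes "a > 1"
  shows "continuous_on {a..b} (\<lambda>\<tau>. ln \<tau> powr s / \<tau> powr q)"
  using assms by (intro continuous_intros) auto

lemma g_integrable:
  fixes s q :: real
  assumes q: "q > 1" and s: "s > 0"
  shows "(\<lambda>\<tau>. ln \<tau> powr s / \<tau> powr q) integrable_on {2..}"
proof (rule integrable_on_all_intervals_integrable_bound)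
  fix a b :: real
  have "(\<lambda>\<tau>. ln \<tau> powr s / \<tau> powr q) integrable_on {max 2 a..b}"
    by (rule integrable_continuous_interval, rule g_cont) auto
  moreover have "{2..} \<inter> cbox a b = {max 2 a..b}" by auto
  ultimately show "(\<lambda>x. if x \<in> {2..} then ln x powr s / x powr q else 0) integrable_on cbox a b"
    unfolding integrable_restrict_Int by simp
next
  define e where "e = (q - 1) / (2 * s)"
  have e: "e > 0" using q s by (simp add: e_def)
  have es: "e * s - q = -(q+1)/2" using s by (simp add: e_def field_simps)
  show "(\<lambda>x. x powr (-(q+1)/2) / e powr s) integrable_on {2..}"
    using has_integral_powr_to_inf[of "-(q+1)/2" 2] q
    by (intro integrable_on_divide) (auto simp: integrable_on_def)
  fix x :: real assume "x \<in> {2..}"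
  hence x: "x \<ge> 2" by simp
  have lnx: "ln x \<ge> 0" using x by simp
  have "e * ln x = ln (x powr e)" using x by (simp add: ln_powr)
  also have "\<dots> \<le> x powr e - 1" using x by (intro ln_le_minus_one) auto
  finally have "ln x \<le> x powr e / e" using e by (simp add: field_simps)
  hence "ln x powr s \<le> (x powr e / e) powr s"
    using lnx s by (intro powr_mono2) auto
  also have "\<dots> = x powr (e * s) / e powr s"
    using x e by (simp add: powr_divide powr_powr)
  finally have "ln x powr s / x powr q \<le> x powr (e * s) / e powr s / x powr q"
    using x by (intro divide_right_mono) auto
  also have "\<dots> = x powr (e * s - q) / e powr s"
    using x by (simp add: powr_diff)
  finally show "norm (ln x powr s / x powr q) \<le> x powr (-(q+1)/2) / e powr s"
    using es by simp
qed



theorem lemma4p1: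
  fixes \<Phi> \<Phi>' :: "real \<Rightarrow> real" and C0 C1 p q t0 :: real
  assumes "C0 > 0" and "C1 \<ge> 0" and "p > 1" and "q > 1" and "t0 \<ge> 2"
    and deriv: "\<And>t. t \<ge> t0 \<Longrightarrow> (\<Phi> has_real_derivative \<Phi>' t) (at t within {t0..})"
    and ineq: "\<And>t. t \<ge> t0 \<Longrightarrow> \<Phi>' t \<le> - (C0 / t) * \<bar>\<Phi> t\<bar> powr p + C1 / t powr q"
  shows "\<forall>t\<ge>t0. \<Phi> t \<le>
     (1 / ln 2 * ((ln t0) powr (holder_conj p) * \<Phi> t0
        + C1 * integral {2..} (\<lambda>\<tau>. (ln \<tau>) powr (holder_conj p) / \<tau> powr q))
      + (holder_conj p / (C0 * p)) powr (holder_conj p - 1))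
     / (ln t) powr (holder_conj p - 1)"
proof -
  note C0 = \<open>C0 > 0\<close> and C1 = \<open>C1 \<ge> 0\<close> and p = \<open>p > 1\<close> and q = \<open>q > 1\<close> and t0 = \<open>t0 \<ge> 2\<close>
  define s where "s = holder_conj p"
  have s1: "s > 1" using p by (simp add: s_def holder_conj_def field_simps)
  define K where "K = (s / (C0 * p)) powr (s - 1)"
  have K0: "K \<ge> 0" by (simp add: K_def)
  define g where "g = (\<lambda>\<tau>::real. ln \<tau> powr s / \<tau> powr q)"
  define I where "I = integral {2..} g"
  define G where "G = (\<lambda>x. integral {t0..x} g)"
  define A where "A = ln t0 powr s * \<Phi> t0 + C1 * I"
  have lt0: "ln t0 > 0" using t0 by simp
  have g0: "\<And>x. g x \<ge> 0" by (simp add: g_def)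
  have gint: "g integrable_on {2..}" unfolding g_def using g_integrable[OF q] s1 by simp
  have gcont: "\<And>T. continuous_on {t0..T} g" unfolding g_def using t0 by (intro g_cont) auto
  have I0: "I \<ge> 0" unfolding I_def using gint g0 by (intro integral_nonneg) auto
  have GleI: "G x \<le> I" if "x \<ge> t0" for x
    unfolding G_def I_def
    using t0 gint g0 integrable_continuous_interval[OF gcont[of x]]
    by (intro integral_subset_le) auto
  have G0: "G t0 = 0" by (simp add: G_def)
  have Gd: "(G has_real_derivative g x) (at x within {t0..T})" if "x \<in> {t0..T}" for x T
    unfolding G_def by (rule integral_has_real_derivative[OF gcont that])
  have \<Phi>d: "(\<Phi> has_real_derivative \<Phi>' x) (at x within {t0..T})" if "x \<in> {t0..T}" for x T
    using deriv[of x] that by (auto intro: has_field_derivative_subset)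
  have lnd: "(ln has_real_derivative inverse x) (at x within S)" if "x \<ge> t0" for x S
    by (rule has_field_derivative_at_within, rule DERIV_ln) (use that t0 in auto)

  have A0: "A \<ge> 0"
  proof (rule ccontr)
    assume "\<not> A \<ge> 0"
    hence Aneg: "A < 0" by simp
    define c0 where "c0 = C1 / ln t0 powr s"
    have c00: "c0 \<ge> 0" using C1 by (simp add: c0_def)
    define J where "J = c0 * I"
    have J0: "J \<ge> 0" using c00 I0 by (simp add: J_def)
    define v where "v = (\<lambda>x. - \<Phi> x + c0 * G x)"
    define v' where "v' = (\<lambda>x. - \<Phi>' x + c0 * g x)"
    have lt0s: "ln t0 powr s > 0" using lt0 by simp
    have "ln t0 powr s * \<Phi> t0 < - (C1 * I)" using Aneg by (simp add: A_def)
    hence "\<Phi> t0 < - (C1 * I) / ln t0 powr s" using lt0s by (metis mult.commute pos_less_divide_eq)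
    hence vt0: "v t0 > J" by (simp add: v_def G0 J_def c0_def)
    have vd: "(v has_real_derivative v' x) (at x within {t0..T})" if "x \<in> {t0..T}" for x T
      unfolding v_def v'_def using \<Phi>d[OF that] Gd[OF that]
      by (intro DERIV_add DERIV_minus DERIV_cmult)
    have v'ge: "v' x \<ge> C0 / x * \<bar>\<Phi> x\<bar> powr p" if "x \<ge> t0" for x
    proof -
      have x: "x > 0" "ln x \<ge> ln t0" using that t0 by auto
      have "ln t0 powr s \<le> ln x powr s" using x lt0 s1 by (intro powr_mono2) auto
      hence "1 \<le> ln x powr s / ln t0 powr s" using lt0s by simp
      hence "C1 / x powr q * 1 \<le> C1 / x powr q * (ln x powr s / ln t0 powr s)"
        using C1 x by (intro mult_left_mono) auto
      also have "\<dots> = c0 * g x" by (simp add: c0_def g_def)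
      finally have "C1 / x powr q \<le> c0 * g x" by simp
      moreover have "\<Phi>' x \<le> - (C0 / x) * \<bar>\<Phi> x\<bar> powr p + C1 / x powr q" using ineq that .
      ultimately show ?thesis by (simp add: v'_def)
    qed
    have vinc: "v x \<ge> v t0" if "x \<ge> t0" for x
    proof -
      have "(\<lambda>y. - v y) x \<le> (\<lambda>y. - v y) t0"
      proof (rule dec_helper[where f = "\<lambda>y. - v y" and a = t0 and b = x and f' = "\<lambda>y. - v' y"])
        show "t0 \<le> x" by fact
        show "((\<lambda>y. - v y) has_real_derivative - v' y) (at y within {t0..x})" if "y \<in> {t0..x}" for y
          using vd[OF that] by (intro derivative_intros)
        show "- v' y \<le> 0" if "t0 < y" "y < x" for y
        proof -
          have "0 \<le> C0 / y * \<bar>\<Phi> y\<bar> powr p" using C0 that t0 by simp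
          thus ?thesis using v'ge[of y] that by simp
        qed
      qed
      thus ?thesis by simp
    qed
    have vpos: "v x > 0" if "x \<ge> t0" for x using vinc[OF that] vt0 J0 by simp
    define c where "c = 1 - J / v t0"
    have c: "c > 0" using vt0 J0 by (simp add: c_def)
    have \<Phi>ge: "\<bar>\<Phi> x\<bar> \<ge> c * v x" if "x \<ge> t0" for x
    proof -
      have "c0 * G x \<le> J" unfolding J_def using c00 GleI[OF that] by (intro mult_left_mono)
      hence "\<bar>\<Phi> x\<bar> \<ge> v x - J" by (simp add: v_def)
      moreover have "1 \<le> v x / v t0" using vinc[OF that] vt0 J0 by simp
      hence "J * 1 \<le> J * (v x / v t0)" using J0 by (intro mult_left_mono)
      hence "J \<le> J * (v x / v t0)" by simp
      hence "v x - J \<ge> c * v x" using vt0 J0 by (simp add: c_def algebra_simps)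
      ultimately show ?thesis by simp
    qed
    define k where "k = (p - 1) * C0 * c powr p"
    have k: "k > 0" using p C0 c by (simp add: k_def)
    define w where "w = (\<lambda>x. v x powr (1 - p) + k * ln x)"
    define T where "T = exp (ln t0 + v t0 powr (1 - p) / k + 1)"
    have T: "T \<ge> t0"
    proof -
      have "t0 = exp (ln t0)" using t0 by simp
      also have "\<dots> \<le> T" unfolding T_def using k by simp
      finally show ?thesis .
    qed
    have wle: "w T \<le> w t0"
    proof (rule dec_helper[where f = w and a = t0 and b = T and f' = "\<lambda>y. (1 - p) * v y powr (1 - p - 1) * v' y + k * inverse y"])
      show "t0 \<le> T" by fact
      show "(w has_real_derivative (1 - p) * v y powr (1 - p - 1) * v' y + k * inverse y) (at y within {t0..T})"
        if "y \<in> {t0..T}" for y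
      proof -
        have y: "y \<ge> t0" using that by simp
        have d1: "((\<lambda>x. v x powr (1 - p)) has_real_derivative (1 - p) * v y powr (1 - p - 1) * v' y) (at y within {t0..T})"
          by (rule DERIV_chain'[OF vd[OF that] has_real_derivative_powr[OF vpos[OF y]]])
        have d2: "((\<lambda>x. k * ln x) has_real_derivative k * inverse y) (at y within {t0..T})"
          by (rule DERIV_cmult, rule lnd[OF y])
        show ?thesis unfolding w_def by (rule DERIV_add[OF d1 d2])
      qed
      show "(1 - p) * v y powr (1 - p - 1) * v' y + k * inverse y \<le> 0" if "t0 < y" "y < T" for y
      proof -
        have y: "y \<ge> t0" "y > 0" using that t0 by auto
        have vy: "v y > 0" using vpos y by simp
        have h1: "(c * v y) powr p \<le> \<bar>\<Phi> y\<bar> powr p" using \<Phi>ge[OF y(1)] c vy p by (intro powr_mono2) auto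
        have "C0 / y * (c * v y) powr p \<le> C0 / y * \<bar>\<Phi> y\<bar> powr p"
          using C0 y by (intro mult_left_mono[OF h1]) auto
        hence h2: "C0 / y * (c * v y) powr p \<le> v' y"
          using v'ge[OF y(1)] by linarith
        have "(1 - p) * v y powr (1 - p - 1) * v' y \<le> (1 - p) * v y powr (1 - p - 1) * (C0 / y * (c * v y) powr p)"
          using p vy h2 by (intro mult_left_mono_neg) (auto intro: mult_nonpos_nonneg)
        also have "(c * v y) powr p = c powr p * v y powr p" using c vy by (simp add: powr_mult)
        also have "1 - p - 1 = - p" by simp
        also have "(1 - p) * v y powr (- p) * (C0 / y * (c powr p * v y powr p))
            = - k * inverse y * (v y powr (- p) * v y powr p)"
          unfolding k_def divide_inverse by algebra
        also have "v y powr (- p) * v y powr p = 1"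
          using vy by (simp add: powr_minus)
        finally have X: "(1 - p) * v y powr (- p) * v' y \<le> - k * inverse y * 1" .
        have e: "1 - p - 1 = - p" by simp
        show ?thesis unfolding e using X by linarith
      qed
    qed
    hence "v T powr (1 - p) + k * ln T \<le> v t0 powr (1 - p) + k * ln t0" by (simp only: w_def)
    moreover have "ln T = ln t0 + v t0 powr (1 - p) / k + 1" by (simp add: T_def)
    moreover have "k * (v t0 powr (1 - p) / k) = v t0 powr (1 - p)" using k by simp
    ultimately have "v T powr (1 - p) \<le> - k" by (simp add: distrib_left)
    thus False using k powr_ge_zero[of "v T" "1 - p"] by linarith
  qed

  show ?thesis
  proof (intro allI impI)
    fix t assume tt: "t \<ge> t0"
    define L where "L = ln t"
    have L: "L \<ge> ln t0" "L > 0" "L \<ge> ln 2" using tt t0 lt0 by (auto simp: L_def)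
    define F where "F = (\<lambda>x. ln x powr s * \<Phi> x - K * ln x - C1 * G x)"
    define F' where "F' = (\<lambda>x. inverse x * (s * ln x powr (s - 1) * \<Phi> x) + ln x powr s * \<Phi>' x - K * inverse x - C1 * g x)"
    have "F t \<le> F t0"
    proof (rule dec_helper[where f = F and a = t0 and b = t and f' = F'])
      show "t0 \<le> t" by fact
      show "(F has_real_derivative F' x) (at x within {t0..t})" if "x \<in> {t0..t}" for x
      proof -
        have x: "x \<ge> t0" using that by simp
        have lx: "ln x > 0" using x lt0 by (smt (verit) ln_le_cancel_iff t0)
        have d1: "((\<lambda>x. ln x powr s) has_real_derivative s * ln x powr (s - 1) * inverse x) (at x within {t0..t})"
          by (rule DERIV_chain'[OF lnd[OF x] has_real_derivative_powr[OF lx]])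
        have d2: "((\<lambda>x. ln x powr s * \<Phi> x) has_real_derivative
            ln x powr s * \<Phi>' x + s * ln x powr (s - 1) * inverse x * \<Phi> x) (at x within {t0..t})"
          by (rule DERIV_mult'[OF d1 \<Phi>d[OF that]])
        have d3: "(F has_real_derivative
            (ln x powr s * \<Phi>' x + s * ln x powr (s - 1) * inverse x * \<Phi> x) - K * inverse x - C1 * g x) (at x within {t0..t})"
          unfolding F_def
          by (intro DERIV_diff d2 DERIV_cmult lnd[OF x] Gd[OF that])
        show ?thesis
          by (rule DERIV_cong[OF d3]) (simp add: F'_def ac_simps)
      qed
      show "F' x \<le> 0" if "t0 < x" "x < t" for x
      proof -
        have x: "x \<ge> t0" "x > 0" using that t0 by auto
        have lx: "ln x > 0" using x lt0 by (smt (verit) ln_le_cancel_iff t0)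
        define Y where "Y = \<bar>\<Phi> x\<bar>"
        define P where "P = s * ln x powr (s - 1) * \<Phi> x"
        define Q where "Q = C0 * ln x powr s * Y powr p"
        have "s * ln x powr (s - 1) * Y \<le> Q + K"
          unfolding Q_def K_def s_def Y_def using young_helper[OF p C0 lx, of "\<bar>\<Phi> x\<bar>"] by simp
        moreover have "P \<le> s * ln x powr (s - 1) * Y"
          unfolding P_def Y_def using s1 by (intro mult_left_mono) auto
        ultimately have "P \<le> Q + K" by linarith
        hence "inverse x * P \<le> inverse x * (Q + K)" using x by (intro mult_left_mono) auto
        hence h1: "inverse x * P \<le> inverse x * Q + K * inverse x" by (simp add: distrib_left mult.commute)
        have "ln x powr s * \<Phi>' x \<le> ln x powr s * (- (C0 / x) * \<bar>\<Phi> x\<bar> powr p + C1 / x powr q)"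
          using ineq[OF x(1)] by (intro mult_left_mono) auto
        also have "\<dots> = - (inverse x * Q) + C1 * g x"
          unfolding Q_def Y_def g_def divide_inverse by algebra
        finally have h2: "ln x powr s * \<Phi>' x \<le> - (inverse x * Q) + C1 * g x" .
        have "F' x = inverse x * P + ln x powr s * \<Phi>' x - K * inverse x - C1 * g x"
          by (simp add: F'_def P_def)
        also have "\<dots> \<le> 0" using h1 h2 by linarith
        finally show ?thesis .
      qed
    qed
    hence "L powr s * \<Phi> t - K * L - C1 * G t \<le> ln t0 powr s * \<Phi> t0 - K * ln t0"
      by (simp add: F_def G0 L_def)
    moreover have "C1 * G t \<le> C1 * I" using GleI[OF tt] C1 by (intro mult_left_mono)
    moreover have "K * ln t0 \<ge> 0" using K0 lt0 by simp
    ultimately have X: "L powr s * \<Phi> t \<le> A + K * L" unfolding A_def by linarith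
    have E: "L powr s = L * L powr (s - 1)"
      using L powr_add[of L 1 "s - 1"] by simp
    have Aineq: "A \<le> A * (L / ln 2)"
    proof -
      have "1 \<le> L / ln 2" using L by simp
      hence "A * 1 \<le> A * (L / ln 2)" using A0 by (intro mult_left_mono)
      thus ?thesis by simp
    qed
    have e1: "L * (L powr (s - 1) * \<Phi> t) = L powr s * \<Phi> t" using E by simp
    have e2: "L * (1 / ln 2 * A + K) = A * (L / ln 2) + K * L" by (simp add: field_simps)
    have "L * (L powr (s - 1) * \<Phi> t) \<le> L * (1 / ln 2 * A + K)"
      unfolding e1 e2 using X Aineq by linarith
    hence "L powr (s - 1) * \<Phi> t \<le> 1 / ln 2 * A + K" using L by simp
    hence "\<Phi> t \<le> (1 / ln 2 * A + K) / L powr (s - 1)"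
      using L by (simp add: pos_le_divide_eq mult.commute)
    thus "\<Phi> t \<le>
     (1 / ln 2 * ((ln t0) powr (holder_conj p) * \<Phi> t0
        + C1 * integral {2..} (\<lambda>\<tau>. (ln \<tau>) powr (holder_conj p) / \<tau> powr q))
      + (holder_conj p / (C0 * p)) powr (holder_conj p - 1))
     / (ln t) powr (holder_conj p - 1)"
      unfolding A_def I_def g_def K_def L_def s_def .
  qed
qed

end
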